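(* In the two-type population dependent branching process with parameters $p\in(0,1]$, $q\in[0,1]$, let $n(t)=n_A(t)+n_B(t)$ and let $W$ be the almost sure limit of $e^{-t}n_A(t)$ (a strictly positive finite random variable). Then $e^{-t}n(t)\to W+(1-p)W/p=:W_\infty$ almost surely as $t\to\infty$. In particular, the stopping times $T_n=\inf\{t\ge0: n(t)=n\}$ satisfy $T_n-\log n\to-\log W_\infty$ almost surely as $n\to\infty$, where $W_\infty$ is a strictly positive finite random variable.
   Context: Population dependent branching process: a continuous-time Markov process started at time $0$ with two individuals, one of type $A$ and one of type $B$; individuals live forever. Let $n_A(t), n_B(t)$ be the numbers of type $A$, $B$ individuals at time $t$ ($n_A(0)=n_B(0)=1$). At time $t$, each type $A$ individual gives birth to type $A$ individuals at rate $q$ and to type $B$ individuals at rate $(1-p)(1-q)/p$; each type $B$ individual gives birth to type $A$ individuals at rate $\frac{n_A(t)}{n_B(t)}(1-q)$ and to type $B$ individuals at rate $\frac{n_A(t)}{n_B(t)}\cdot\frac{q(1-p)}{p}$. *)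

theory Defs
  imports "HOL-Probability.Probability"
begin

text \<open>
  Two-type population dependent branching process (continuous-time Markov chain),
  realised by the standard jump-chain / holding-time construction from rates.  From state (a, b) the chain jumps to (a+1, b)
  with rate rateA and to (a, b+1) with rate rateB, where these are the
  total rates of all individuals as described in the paper.
\<close>

definition rateA :: "real \<Rightarrow> real \<Rightarrow> nat \<times> nat \<Rightarrow> real" where
  "rateA p q s = (let a = real (fst s); b = real (snd s) in
      a * q + b * ((a / b) * (1 - q)))"

definition rateB :: "real \<Rightarrow> real \<Rightarrow> nat \<times> nat \<Rightarrow> real" where
  "rateB p q s = (let a = real (fst s); b = real (snd s) in
      a * ((1 - p) * (1 - q) / p) + b * ((a / b) * (q * (1 - p) / p)))"

definition total_rate :: "real \<Rightarrow> real \<Rightarrow> nat \<times> nat \<Rightarrow> real" where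
  "total_rate p q s = rateA p q s + rateB p q s"

text \<open>Embedded jump chain driven by uniform variables U k:
  the k-th jump is an A-birth iff U k < rateA / total_rate.\<close>

fun jump_chain :: "real \<Rightarrow> real \<Rightarrow> (nat \<Rightarrow> real) \<Rightarrow> nat \<Rightarrow> nat \<times> nat" where
  "jump_chain p q u 0 = (1, 1)"
| "jump_chain p q u (Suc k) =
     (let s = jump_chain p q u k in
      if u k < rateA p q s / total_rate p q s then (fst s + 1, snd s) else (fst s, snd s + 1))"

text \<open>Jump times: J 0 = 0, J (k+1) = J k + e k / total_rate (state k),
  with e k standard exponential variables.\<close>

definition jump_time :: "real \<Rightarrow> real \<Rightarrow> (nat \<Rightarrow> real) \<Rightarrow> (nat \<Rightarrow> real) \<Rightarrow> nat \<Rightarrow> real" where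
  "jump_time p q u e k = (\<Sum>i<k. e i / total_rate p q (jump_chain p q u i))"

definition num_jumps :: "real \<Rightarrow> real \<Rightarrow> (nat \<Rightarrow> real) \<Rightarrow> (nat \<Rightarrow> real) \<Rightarrow> real \<Rightarrow> nat" where
  "num_jumps p q u e t = card {k. 0 < k \<and> jump_time p q u e k \<le> t}"

definition state_at :: "real \<Rightarrow> real \<Rightarrow> (nat \<Rightarrow> real) \<Rightarrow> (nat \<Rightarrow> real) \<Rightarrow> real \<Rightarrow> nat \<times> nat" where
  "state_at p q u e t = jump_chain p q u (num_jumps p q u e t)"

definition nA :: "real \<Rightarrow> real \<Rightarrow> (nat \<Rightarrow> real) \<Rightarrow> (nat \<Rightarrow> real) \<Rightarrow> real \<Rightarrow> nat" where
  "nA p q u e t = fst (state_at p q u e t)"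

definition nB :: "real \<Rightarrow> real \<Rightarrow> (nat \<Rightarrow> real) \<Rightarrow> (nat \<Rightarrow> real) \<Rightarrow> real \<Rightarrow> nat" where
  "nB p q u e t = snd (state_at p q u e t)"

definition ntot :: "real \<Rightarrow> real \<Rightarrow> (nat \<Rightarrow> real) \<Rightarrow> (nat \<Rightarrow> real) \<Rightarrow> real \<Rightarrow> nat" where
  "ntot p q u e t = nA p q u e t + nB p q u e t"

definition hit_time :: "real \<Rightarrow> real \<Rightarrow> (nat \<Rightarrow> real) \<Rightarrow> (nat \<Rightarrow> real) \<Rightarrow> nat \<Rightarrow> real" where
  "hit_time p q u e n = Inf {t. 0 \<le> t \<and> ntot p q u e t = n}"

end

theory Submission
  imports Defs "HOL-Real_Asymp.Real_Asymp"
begin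


lemma (in prob_space) slln_01:
  fixes Y :: "'b \<Rightarrow> 'a \<Rightarrow> real" and g :: "nat \<Rightarrow> 'b" and p :: real
  assumes ind: "indep_vars (\<lambda>_. borel) Y UNIV" and g: "inj g"
    and bnd: "\<And>i. AE x in M. Y (g i) x \<in> {0..1}"
    and ex: "\<And>i. expectation (Y (g i)) = p"
  defines "X \<equiv> \<lambda>i. Y (g i)"
  shows "AE x in M. (\<lambda>n. (\<Sum>i<n. X i x) / real n) \<longlonglongrightarrow> p"
proof -
  have rv[measurable]: "\<And>i. X i \<in> borel_measurable M"
    using ind unfolding indep_vars_def X_def by auto
  have key: "AE x in M. eventually (\<lambda>n. \<bar>(\<Sum>i<n. X i x) - real n * p\<bar> < real n * \<epsilon>) sequentially"
    if eps: "\<epsilon> > 0" for \<epsilon> :: real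
  proof -
    define A where "A n = {x\<in>space M. \<bar>(\<Sum>i<n. X i x) - real n * p\<bar> \<ge> real n * \<epsilon>}" for n
    have Am[measurable]: "A n \<in> sets M" for n unfolding A_def by measurable
    have bound: "measure M (A n) \<le> 2 * exp (-2 * \<epsilon>\<^sup>2) ^ n" for n
    proof (cases "n = 0")
      case True
      have "prob (A 0) \<le> 1" using prob_le_1[of "A 0"] by blast
      then show ?thesis using True by (simp del: prob_le_1)
    next
      case False
      interpret H: Hoeffding_ineq M "g ` {..<n}" Y "\<lambda>_. 0" "\<lambda>_. 1" "real n * p"
      proof unfold_locales
        show "indep_vars (\<lambda>_. borel) Y (g ` {..<n})" using ind by (rule indep_vars_subset) auto
        have "(\<Sum>i\<in>g ` {..<n}. expectation (Y i)) = (\<Sum>i<n. expectation (Y (g i)))"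
          using g by (simp add: sum.reindex inj_on_def inj_def)
        then show "real n * p \<equiv> \<Sum>i\<in>g ` {..<n}. expectation (Y i)" using ex by simp
      qed (use bnd in auto)
      have cn: "card (g ` {..<n}) = n" using g by (simp add: card_image inj_on_subset)
      have si: "(\<Sum>i\<in>g ` {..<n}. h i) = (\<Sum>i<n. h (g i))" for h :: "'b \<Rightarrow> real"
        using g by (simp add: sum.reindex inj_on_def inj_def)
      have "measure M (A n) \<le> 2 * exp (-2 * (real n * \<epsilon>)\<^sup>2 / (\<Sum>i\<in>g ` {..<n}. (1 - 0)\<^sup>2))"
        unfolding A_def X_def using H.Hoeffding_ineq_abs_ge[of "real n * \<epsilon>"] eps False cn by (simp add: si)
      also have "\<dots> = 2 * exp (-2 * \<epsilon>\<^sup>2) ^ n"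
        using False cn by (simp add: power2_eq_square exp_of_nat_mult[symmetric] field_simps)
      finally show ?thesis .
    qed
    have "summable (\<lambda>n. 2 * exp (-2 * \<epsilon>\<^sup>2) ^ n)"
      using eps by (intro summable_mult summable_geometric) auto
    then have "summable (\<lambda>n. measure M (A n))"
      by (rule summable_comparison_test'[where N=0]) (use bound in auto)
    then have "AE x in M. eventually (\<lambda>n. x \<in> space M - A n) sequentially"
      by (intro borel_cantelli_AE1) (auto simp: less_top[symmetric])
    then show ?thesis
      by (rule AE_mp) (auto intro!: AE_I2 elim!: eventually_mono simp: A_def)
  qed
  have "AE x in M. \<forall>m::nat. eventually (\<lambda>n. \<bar>(\<Sum>i<n. X i x) - real n * p\<bar> < real n * (1 / Suc m)) sequentially"
    by (subst AE_all_countable) (intro allI key, simp)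
  then show ?thesis
  proof (rule AE_mp, intro AE_I2 impI)
    fix x assume H: "\<forall>m::nat. eventually (\<lambda>n. \<bar>(\<Sum>i<n. X i x) - real n * p\<bar> < real n * (1 / Suc m)) sequentially"
    show "(\<lambda>n. (\<Sum>i<n. X i x) / real n) \<longlonglongrightarrow> p"
    proof (rule tendstoI)
      fix d :: real assume "d > 0"
      then obtain m :: nat where m: "1 / Suc m < d"
        by (metis nat_approx_posE)
      show "eventually (\<lambda>n. dist ((\<Sum>i<n. X i x) / real n) p < d) sequentially"
        using H[rule_format, of m] eventually_gt_at_top[of 0]
      proof eventually_elim
        case (elim n)
        then have "\<bar>(\<Sum>i<n. X i x) / real n - p\<bar> < 1 / Suc m"
          by (simp add: field_simps abs_div_pos[symmetric] divide_less_eq)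
        then show ?case using m by (simp add: dist_real_def)
      qed
    qed
  qed
qed



definition cnt :: "real \<Rightarrow> (nat \<Rightarrow> real) \<Rightarrow> nat \<Rightarrow> nat" where
  "cnt p u k = card {i. i < k \<and> u i < p}"

lemma cnt_0[simp]: "cnt p u 0 = 0" by (simp add: cnt_def)

lemma cnt_Suc: "cnt p u (Suc k) = cnt p u k + (if u k < p then 1 else 0)"
proof -
  have "{i. i < Suc k \<and> u i < p} = {i. i < k \<and> u i < p} \<union> (if u k < p then {k} else {})"
    by (auto simp: less_Suc_eq)
  then show ?thesis by (simp add: cnt_def)
qed

lemma cnt_le: "cnt p u k \<le> k"
proof -
  have "cnt p u k \<le> card {..<k}" unfolding cnt_def by (rule card_mono) auto
  then show ?thesis by simp
qed

lemma cnt_sum: "real (cnt p u k) = (\<Sum>i<k. indicator {..<p} (u i))"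
  by (induction k) (auto simp: cnt_Suc)

lemma rates:
  assumes "0 < p" "1 \<le> a" "1 \<le> b"
  shows "rateA p q (a, b) = real a" "total_rate p q (a, b) = real a / p"
  using assms by (auto simp: rateA_def rateB_def total_rate_def Let_def field_simps)

lemma jc:
  assumes "0 < p"
  shows "jump_chain p q u k = (Suc (cnt p u k), Suc (k - cnt p u k))"
proof (induction k)
  case 0 then show ?case by simp
next
  case (Suc k)
  have c: "cnt p u k \<le> k" by (rule cnt_le)
  have r: "rateA p q (Suc a, Suc b) / total_rate p q (Suc a, Suc b) = p" for a b
    using assms by (simp add: rates del: of_nat_Suc)
  show ?case using c by (simp add: Let_def r cnt_Suc Suc Suc_diff_le)
qed

lemma total_jc:
  assumes "0 < p"
  shows "total_rate p q (jump_chain p q u k) = real (Suc (cnt p u k)) / p"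
  using assms by (simp add: jc rates del: of_nat_Suc)

context
  fixes p q :: real and u e :: "nat \<Rightarrow> real" and W :: real
  assumes p0: "0 < p" and p1: "p \<le> 1"
    and epos: "\<And>i. 0 < e i"
    and lln: "(\<lambda>n. real (cnt p u n) / real n) \<longlonglongrightarrow> p"
    and conv: "((\<lambda>t. exp (- t) * real (nA p q u e t)) \<longlongrightarrow> W) at_top"
    and Wpos: "0 < W"
begin

abbreviation "J \<equiv> jump_time p q u e"
abbreviation "N \<equiv> num_jumps p q u e"

lemma J0: "J 0 = 0" by (simp add: jump_time_def)

lemma J_Suc: "J (Suc k) = J k + e k / total_rate p q (jump_chain p q u k)"
  by (simp add: jump_time_def)

lemma J_smono: "strict_mono J"
  unfolding strict_mono_Suc_iff
proof
  fix n
  have "0 < e n / total_rate p q (jump_chain p q u n)"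
    using epos[of n] p0 by (simp add: total_jc del: of_nat_Suc)
  then show "J n < J (Suc n)" by (simp add: J_Suc)
qed

lemma J_mono: "m \<le> n \<Longrightarrow> J m \<le> J n"
  using J_smono by (simp add: strict_mono_less_eq)

lemma J_nonneg: "0 \<le> J n"
  using J_mono[of 0 n] by (simp add: J0)

lemma N_char:
  assumes "J n \<le> t" "t < J (Suc n)"
  shows "N t = n"
proof -
  have "{k. 0 < k \<and> J k \<le> t} = {1..n}"
  proof (intro set_eqI iffI)
    fix k assume k: "k \<in> {k. 0 < k \<and> J k \<le> t}"
    have "k \<le> n"
    proof (rule ccontr)
      assume "\<not> k \<le> n"
      then have "J (Suc n) \<le> J k" by (intro J_mono) auto
      with k assms show False by auto
    qed
    with k show "k \<in> {1..n}" by auto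
  next
    fix k assume "k \<in> {1..n}"
    then show "k \<in> {k. 0 < k \<and> J k \<le> t}" using J_mono[of k n] assms by auto
  qed
  then show ?thesis by (simp add: num_jumps_def)
qed

lemma J_unbounded: "\<exists>k. B < J k"
proof (rule ccontr)
  assume "\<not> (\<exists>k. B < J k)"
  then have bnd: "\<And>k. J k \<le> B" by (simp add: not_less)
  have "eventually (\<lambda>t. exp (- t) * real (nA p q u e t) = exp (- t)) at_top"
    using eventually_ge_at_top[of B]
  proof eventually_elim
    case (elim t)
    have "{k. 0 < k \<and> J k \<le> t} = {k. 0 < k}" using bnd elim by (auto intro: order_trans)
    moreover have "infinite {k::nat. 0 < k}"
      by (metis infinite_Ioi greaterThan_def)
    ultimately have "N t = 0" by (simp add: num_jumps_def)
    then show ?case by (simp add: nA_def state_at_def)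
  qed
  then have "((\<lambda>t. exp (- t)) \<longlongrightarrow> W) at_top"
    using conv by (rule Lim_transform_eventually[rotated])
  moreover have "((\<lambda>t::real. exp (- t)) \<longlongrightarrow> 0) at_top" by real_asymp
  ultimately have "W = 0" using tendsto_unique by force
  with Wpos show False by simp
qed

lemma N_exists:
  assumes "0 \<le> t"
  shows "J (N t) \<le> t \<and> t < J (Suc (N t))"
proof -
  obtain K where K: "t < J K" using J_unbounded by blast
  define m where "m = (LEAST k. t < J k)"
  have m1: "t < J m" unfolding m_def by (rule LeastI[of _ K]) (rule K)
  have "m \<noteq> 0"
  proof
    assume "m = 0" with m1 assms show False by (simp add: J0)
  qed
  then obtain n where n: "m = Suc n" by (cases m) auto
  have "\<not> t < J n" using n unfolding m_def by (metis Suc_n_not_le_n not_less_Least le_refl less_Suc_eq_le)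
  then have "J n \<le> t" by simp
  with m1 n have "N t = n" using N_char by simp
  with m1 n \<open>J n \<le> t\<close> show ?thesis by simp
qed

lemma N_J: "N (J n) = n"
  using N_char[of n "J n"] J_smono by (simp add: strict_mono_def)

lemma nA_eq: "nA p q u e t = Suc (cnt p u (N t))"
  using p0 by (simp add: nA_def state_at_def jc)

lemma ntot_eq: "ntot p q u e t = N t + 2"
  using p0 cnt_le[of p u "N t"] by (simp add: ntot_def nA_def nB_def state_at_def jc)

lemma N_lim: "filterlim N at_top at_top"
  unfolding filterlim_at_top
proof
  fix Z :: nat
  show "eventually (\<lambda>t. Z \<le> N t) at_top"
    using eventually_ge_at_top[of "J Z"]
  proof eventually_elim
    case (elim t)
    have t0: "0 \<le> t" using J_nonneg[of Z] elim by linarith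
    show ?case
    proof (rule ccontr)
      assume "\<not> Z \<le> N t"
      then have "J (Suc (N t)) \<le> J Z" by (intro J_mono) auto
      with N_exists[OF t0] elim show False by linarith
    qed
  qed
qed

lemma ratio_lim: "(\<lambda>n. real (n + 2) / real (Suc (cnt p u n))) \<longlonglongrightarrow> 1 / p"
proof -
  have "(\<lambda>n. (1 + 2 / real n) / (1 / real n + real (cnt p u n) / real n)) \<longlonglongrightarrow> (1 + 0) / (0 + p)"
    by (intro tendsto_intros lln) (use p0 in auto)
  moreover have "eventually (\<lambda>n. (1 + 2 / real n) / (1 / real n + real (cnt p u n) / real n)
      = real (n + 2) / real (Suc (cnt p u n))) sequentially"
    using eventually_gt_at_top[of 0]
  proof eventually_elim
    case (elim n)
    have n: "0 < real n" using elim by simp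
    have c: "0 \<le> real (cnt p u n)" by simp
    have "1 / real n + real (cnt p u n) / real n = (1 + real (cnt p u n)) / real n"
      by (simp add: add_divide_distrib)
    moreover have "1 + 2 / real n = (real n + 2) / real n" using n by (simp add: field_simps)
    ultimately show ?case using n c by simp
  qed
  ultimately show ?thesis by (simp add: Lim_transform_eventually)
qed

lemma ntot_conv: "((\<lambda>t. exp (- t) * real (ntot p q u e t)) \<longlongrightarrow> W + (1 - p) * W / p) at_top"
proof -
  have r: "((\<lambda>t. real (N t + 2) / real (Suc (cnt p u (N t)))) \<longlongrightarrow> 1 / p) at_top"
    by (rule filterlim_compose[OF ratio_lim N_lim])
  have "((\<lambda>t. exp (- t) * real (nA p q u e t) * (real (N t + 2) / real (Suc (cnt p u (N t)))))
        \<longlongrightarrow> W * (1 / p)) at_top"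
    by (intro tendsto_mult conv r)
  moreover have "W * (1 / p) = W + (1 - p) * W / p" using p0 by (simp add: field_simps)
  moreover have "(\<lambda>t. exp (- t) * real (nA p q u e t) * (real (N t + 2) / real (Suc (cnt p u (N t)))))
      = (\<lambda>t. exp (- t) * real (ntot p q u e t))"
    by (simp add: nA_eq ntot_eq del: of_nat_Suc of_nat_add)
  ultimately show ?thesis by simp
qed

lemma hit_eq:
  assumes "2 \<le> n"
  shows "hit_time p q u e n = J (n - 2)"
proof -
  have "{t. 0 \<le> t \<and> ntot p q u e t = n} = {J (n - 2)..<J (Suc (n - 2))}"
  proof (intro set_eqI iffI)
    fix t assume "t \<in> {t. 0 \<le> t \<and> ntot p q u e t = n}"
    then have t: "0 \<le> t" "N t = n - 2" by (auto simp: ntot_eq)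
    then show "t \<in> {J (n - 2)..<J (Suc (n - 2))}" using N_exists[OF t(1)] by auto
  next
    fix t assume t: "t \<in> {J (n - 2)..<J (Suc (n - 2))}"
    then have "N t = n - 2" using N_char by auto
    moreover have "0 \<le> t" using t J_nonneg[of "n - 2"] by auto
    ultimately show "t \<in> {t. 0 \<le> t \<and> ntot p q u e t = n}" using assms by (simp add: ntot_eq)
  qed
  moreover have "J (n - 2) < J (Suc (n - 2))" using J_smono by (simp add: strict_mono_def)
  ultimately show ?thesis by (simp add: hit_time_def)
qed

lemma J_lim: "filterlim (\<lambda>n. J (n - 2)) at_top sequentially"
  unfolding filterlim_at_top
proof
  fix Z :: real
  obtain k where k: "Z < J k" using J_unbounded by blast
  show "eventually (\<lambda>n. Z \<le> J (n - 2)) sequentially"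
    using eventually_ge_at_top[of "k + 2"]
    by eventually_elim (use k J_mono in \<open>smt (verit) le_diff_conv2 add_leD2 add.commute\<close>)
qed

lemma hit_conv:
  "(\<lambda>n. hit_time p q u e n - ln (real n)) \<longlonglongrightarrow> - ln (W + (1 - p) * W / p)"
proof -
  define L where "L = W + (1 - p) * W / p"
  have Lpos: "0 < L" unfolding L_def using p0 p1 Wpos by (simp add: add_pos_nonneg)
  have "(\<lambda>n. exp (- J (n - 2)) * real (ntot p q u e (J (n - 2)))) \<longlonglongrightarrow> L"
    unfolding L_def by (rule filterlim_compose[OF ntot_conv J_lim])
  moreover have "eventually (\<lambda>n. exp (- J (n - 2)) * real (ntot p q u e (J (n - 2)))
      = exp (- J (n - 2)) * real n) sequentially"
    using eventually_ge_at_top[of 2] by eventually_elim (simp add: ntot_eq N_J)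
  ultimately have f: "(\<lambda>n. exp (- J (n - 2)) * real n) \<longlonglongrightarrow> L"
    by (rule Lim_transform_eventually)
  have "(\<lambda>n. - ln (exp (- J (n - 2)) * real n)) \<longlonglongrightarrow> - ln L"
    by (intro tendsto_intros f) (use Lpos in auto)
  moreover have "eventually (\<lambda>n. - ln (exp (- J (n - 2)) * real n) = hit_time p q u e n - ln (real n))
      sequentially"
    using eventually_ge_at_top[of 2] by eventually_elim (simp add: hit_eq ln_mult)
  ultimately show ?thesis unfolding L_def by (rule Lim_transform_eventually)
qed

end



theorem lemma5p3:
  fixes M :: "'a measure" and U E :: "nat \<Rightarrow> 'a \<Rightarrow> real" and W :: "'a \<Rightarrow> real"
    and p q :: real
  assumes "prob_space M"
    and "0 < p" "p \<le> 1" "0 \<le> q" "q \<le> 1"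
    and "prob_space.indep_vars M (\<lambda>_. borel) (case_sum U E) UNIV"
    and "\<And>k. distributed M lborel (U k) (\<lambda>x. ennreal (indicator {0..1} x))"
    and "\<And>k. distributed M lborel (E k) (exponential_density 1)"
    and "W \<in> borel_measurable M"
    and "AE \<omega> in M. ((\<lambda>t. exp (- t) * real (nA p q (\<lambda>k. U k \<omega>) (\<lambda>k. E k \<omega>) t))
                         \<longlongrightarrow> W \<omega>) at_top"
    and "AE \<omega> in M. 0 < W \<omega>"
  shows "AE \<omega> in M.
           ((\<lambda>t. exp (- t) * real (ntot p q (\<lambda>k. U k \<omega>) (\<lambda>k. E k \<omega>) t))
              \<longlongrightarrow> W \<omega> + (1 - p) * W \<omega> / p) at_top
         \<and> ((\<lambda>n. hit_time p q (\<lambda>k. U k \<omega>) (\<lambda>k. E k \<omega>) n - ln (real n))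
              \<longlonglongrightarrow> - ln (W \<omega> + (1 - p) * W \<omega> / p))
         \<and> 0 < W \<omega> + (1 - p) * W \<omega> / p"
  proof -
  interpret prob_space M by (rule assms(1))
  note dU = assms(7) and dE = assms(8)
  have Um[measurable]: "U k \<in> borel_measurable M" for k
    using distributed_measurable[OF dU[of k]] by simp
  have ind2: "indep_vars (\<lambda>_. borel) (\<lambda>j x. indicator {..<p} (case_sum U E j x) :: real) UNIV"
    by (rule indep_vars_compose2[OF assms(6)]) auto
  have ex: "expectation (\<lambda>x. indicator {..<p} (U i x) :: real) = p" for i
  proof -
    have "(\<lambda>x. indicator {..<p} (U i x) :: real) = indicator (U i -` {..<p})"
      by (auto simp: fun_eq_iff split: split_indicator)
    then have e1: "expectation (\<lambda>x. indicator {..<p} (U i x) :: real) = measure M (U i -` {..<p} \<inter> space M)"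
      by simp
    have "emeasure M (U i -` {..<p} \<inter> space M)
        = (\<integral>\<^sup>+x. ennreal (indicator {0..1} x) * indicator {..<p} x \<partial>lborel)"
      by (rule distributed_emeasure[OF dU]) simp
    also have "\<dots> = (\<integral>\<^sup>+x. indicator {0..<p} x \<partial>lborel)"
      using assms(3) by (intro nn_integral_cong) (auto split: split_indicator)
    also have "\<dots> = ennreal p" using assms(2) by simp
    finally have "ennreal (measure M (U i -` {..<p} \<inter> space M)) = ennreal p"
      by (simp add: emeasure_eq_measure)
    then show ?thesis using e1 assms(2) by simp
  qed
  have lln: "AE x in M. (\<lambda>n. (\<Sum>i<n. (\<lambda>j x. indicator {..<p} (case_sum U E j x) :: real) (Inl i) x) / real n) \<longlonglongrightarrow> p"
    by (rule slln_01[OF ind2]) (use ex in \<open>auto simp: inj_def split: split_indicator\<close>)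
  have Epos: "AE x in M. \<forall>k. 0 < E k x"
  proof (subst AE_all_countable, intro allI)
    fix k
    have "AE x in lborel. 0 < ennreal (exponential_density 1 x) \<longrightarrow> 0 < x"
      using AE_lborel_singleton[of 0]
      by eventually_elim (auto simp: exponential_density_def)
    then show "AE x in M. 0 < E k x"
      by (subst distributed_AE2[OF dE[of k]]) auto
  qed
  show ?thesis
    using lln Epos assms(10) assms(11)
  proof eventually_elim
    case (elim x)
    let ?u = "\<lambda>k. U k x" and ?e = "\<lambda>k. E k x"
    have l: "(\<lambda>n. real (cnt p ?u n) / real n) \<longlonglongrightarrow> p"
      using elim(1) by (simp add: cnt_sum)
    have ep: "\<And>i. 0 < ?e i" using elim(2) by simp
    have "0 < W x + (1 - p) * W x / p"
      using elim(4) assms(2,3) by (simp add: add_pos_nonneg)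
    then show ?case
      using ntot_conv[OF assms(2,3) ep l elim(3,4)] hit_conv[OF assms(2,3) ep l elim(3,4)] by simp
  qed
qed

end
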